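(* For all integers $s\geq 3$, $\chi(\operatorname{KG}(2s+2,2)_{s-\operatorname{stab}})=s+2$, and $\operatorname{KG}(2s+2,2)_{s-\operatorname{stab}}$ is not $\chi$-critical.
   Context: For integers $s,k\geq 2$ and $n\geq ks$, a subset $S\subseteq[n]=\{1,\dots,n\}$ is $s$-stable if $s\leq |i-j|\leq n-s$ for all distinct $i,j\in S$. The $s$-stable Kneser graph $\operatorname{KG}(n,k)_{s-\operatorname{stab}}$ has as vertices the $s$-stable $k$-subsets of $[n]$, two vertices being adjacent iff they are disjoint. A graph $G$ is $\chi$-critical (vertex critical) if every proper subgraph of $G$ has chromatic number strictly less than $\chi(G)$. *)

theory Defs
  imports Main
begin

definition s_stable :: "nat \<Rightarrow> nat \<Rightarrow> nat set \<Rightarrow> bool" where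
  "s_stable n s S \<longleftrightarrow> S \<subseteq> {1..n} \<and>
     (\<forall>i\<in>S. \<forall>j\<in>S. i \<noteq> j \<longrightarrow>
        int s \<le> \<bar>int i - int j\<bar> \<and> \<bar>int i - int j\<bar> \<le> int n - int s)"

definition stable_kneser_vertices :: "nat \<Rightarrow> nat \<Rightarrow> nat \<Rightarrow> nat set set" where
  "stable_kneser_vertices n k s = {S. s_stable n s S \<and> card S = k}"

definition kneser_adj :: "nat set \<Rightarrow> nat set \<Rightarrow> bool" where
  "kneser_adj A B \<longleftrightarrow> A \<inter> B = {}"

text \<open>A graph is given by a vertex set V and a symmetric adjacency relation E
  (considered only on V). Proper colouring with colours {0..<m}.\<close>
definition proper_colouring :: "'a set \<Rightarrow> ('a \<Rightarrow> 'a \<Rightarrow> bool) \<Rightarrow> nat \<Rightarrow> ('a \<Rightarrow> nat) \<Rightarrow> bool" where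
  "proper_colouring V E m f \<longleftrightarrow>
     (\<forall>v\<in>V. f v < m) \<and> (\<forall>u\<in>V. \<forall>v\<in>V. E u v \<longrightarrow> f u \<noteq> f v)"

definition chromatic_number :: "'a set \<Rightarrow> ('a \<Rightarrow> 'a \<Rightarrow> bool) \<Rightarrow> nat" where
  "chromatic_number V E = (LEAST m. \<exists>f. proper_colouring V E m f)"

text \<open>Vertex-critical: every proper (induced) subgraph has smaller chromatic number.\<close>
definition chi_critical :: "'a set \<Rightarrow> ('a \<Rightarrow> 'a \<Rightarrow> bool) \<Rightarrow> bool" where
  "chi_critical V E \<longleftrightarrow> (\<forall>W. W \<subset> V \<longrightarrow> chromatic_number W E < chromatic_number V E)"

end

theory Submission
  imports Defs
begin

lemma pair_in_V:
  assumes "1 \<le> i" "i < j" "j \<le> 2*s+2" "s \<le> j - i" "j - i \<le> s+2"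
  shows "{i,j} \<in> stable_kneser_vertices (2*s+2) 2 s"
  using assms unfolding stable_kneser_vertices_def s_stable_def
  by auto

lemma V_dist:
  assumes "A \<in> stable_kneser_vertices n k s" "x \<in> A" "y \<in> A" "x \<noteq> y"
  shows "int s \<le> \<bar>int x - int y\<bar> \<and> \<bar>int x - int y\<bar> \<le> int n - int s"
  using assms unfolding stable_kneser_vertices_def s_stable_def by blast

lemma card2_elem:
  assumes "card B = 2" "b \<in> B"
  shows "\<exists>c. B = {b,c} \<and> c \<noteq> b"
proof -
  obtain x y where "B = {x,y}" "x \<noteq> y" using assms(1) by (auto simp: card_2_iff)
  thus ?thesis using assms(2) by auto
qed

lemma triangle:
  fixes a b c :: int and s :: nat
  assumes "s \<ge> 3" "a\<noteq>b" "b\<noteq>c" "a\<noteq>c"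
   "int s \<le> \<bar>a-b\<bar>" "\<bar>a-b\<bar> \<le> int s+2"
   "int s \<le> \<bar>b-c\<bar>" "\<bar>b-c\<bar> \<le> int s+2"
   "int s \<le> \<bar>a-c\<bar>" "\<bar>a-c\<bar> \<le> int s+2"
  shows False
  using assms by arith

lemma star:
  assumes s3: "s \<ge> 3"
    and KV: "K \<subseteq> stable_kneser_vertices (2*s+2) 2 s"
    and int: "\<And>A B. A \<in> K \<Longrightarrow> B \<in> K \<Longrightarrow> A \<inter> B \<noteq> {}"
    and A: "A \<in> K"
  shows "\<exists>x. \<forall>B\<in>K. x \<in> B"
proof (rule ccontr)
  assume H: "\<not> ?thesis"
  have cA: "card A = 2" using A KV unfolding stable_kneser_vertices_def by blast
  then obtain a b where ab: "A = {a,b}" "a \<noteq> b" by (auto simp: card_2_iff)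
  obtain B where B: "B \<in> K" "a \<notin> B" using H by blast
  obtain C where C: "C \<in> K" "b \<notin> C" using H by blast
  have bB: "b \<in> B" using int[OF A B(1)] ab B(2) by auto
  have aC: "a \<in> C" using int[OF A C(1)] ab C(2) by auto
  have "card B = 2" using B KV unfolding stable_kneser_vertices_def by blast
  then obtain c where Bc: "B = {b,c}" "c \<noteq> b" using card2_elem[OF _ bB] by metis
  have "card C = 2" using C KV unfolding stable_kneser_vertices_def by blast
  then obtain c' where Cc: "C = {a,c'}" "c' \<noteq> a" using card2_elem[OF _ aC] by metis
  have "c = c'"
  proof -
    have "B \<inter> C \<noteq> {}" using int[OF B(1) C(1)] .
    then obtain z where "z \<in> B" "z \<in> C" by blast
    thus ?thesis using Bc Cc B(2) C(2) by blast
  qed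
  have ca: "c \<noteq> a" using Bc B by auto
  have AV: "A \<in> stable_kneser_vertices (2*s+2) 2 s" using A KV by auto
  have BV: "B \<in> stable_kneser_vertices (2*s+2) 2 s" using B KV by auto
  have CV: "C \<in> stable_kneser_vertices (2*s+2) 2 s" using C KV by auto
  have d1: "int s \<le> \<bar>int a - int b\<bar>" "\<bar>int a - int b\<bar> \<le> int s + 2"
    using V_dist[OF AV, of a b] ab by auto
  have d2: "int s \<le> \<bar>int b - int c\<bar>" "\<bar>int b - int c\<bar> \<le> int s + 2"
    using V_dist[OF BV, of b c] Bc by auto
  have d3: "int s \<le> \<bar>int a - int c\<bar>" "\<bar>int a - int c\<bar> \<le> int s + 2"
    using V_dist[OF CV, of a c] Cc \<open>c = c'\<close> ca by auto
  have n1: "int a \<noteq> int b" using ab by simp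
  have n2: "int b \<noteq> int c" using Bc by simp
  have n3: "int a \<noteq> int c" using ca by simp
  show False by (rule triangle[OF s3 n1 n2 n3 d1 d2 d3])
qed

lemma bigset:
  assumes s3: "s \<ge> 3" and U: "U \<subseteq> {1..2*s+2}" and cU: "card U = s+1"
  shows "\<exists>A\<in>stable_kneser_vertices (2*s+2) 2 s. A \<subseteq> U \<and> A \<noteq> {1,s+2}"
proof (rule ccontr)
  assume H: "\<not> ?thesis"
  define \<sigma> where "\<sigma> i = (if i \<le> s+2 then i+s else i-(s+2))" for i :: nat
  have \<sigma>r: "\<sigma> i \<in> {1..2*s+2}" if "i \<in> {1..2*s+2}" for i
    using that s3 by (auto simp: \<sigma>_def)
  have \<sigma>V: "{i, \<sigma> i} \<in> stable_kneser_vertices (2*s+2) 2 s \<and> {i, \<sigma> i} \<noteq> {1,s+2}"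
    if "i \<in> {1..2*s+2}" for i
  proof (cases "i \<le> s+2")
    case True
    then have "\<sigma> i = i + s" by (simp add: \<sigma>_def)
    moreover have "{i, i+s} \<in> stable_kneser_vertices (2*s+2) 2 s"
      using that True s3 by (intro pair_in_V) auto
    moreover have "{i, i+s} \<noteq> {1,s+2}" using s3 by (auto simp: doubleton_eq_iff)
    ultimately show ?thesis by simp
  next
    case False
    then have "\<sigma> i = i - (s+2)" by (simp add: \<sigma>_def)
    moreover have "{i - (s+2), i} \<in> stable_kneser_vertices (2*s+2) 2 s"
      using that False s3 by (intro pair_in_V) auto
    moreover have "{i - (s+2), i} \<noteq> {1,s+2}" using False s3 by (auto simp: doubleton_eq_iff)
    ultimately show ?thesis by (simp add: insert_commute)
  qed
  have no\<sigma>: "\<sigma> i \<notin> U" if iU: "i \<in> U" for i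
  proof
    assume "\<sigma> i \<in> U"
    hence "{i, \<sigma> i} \<subseteq> U" using iU by simp
    moreover have "i \<in> {1..2*s+2}" using iU U by blast
    ultimately show False using H \<sigma>V[of i] by blast
  qed
  have inj: "inj_on \<sigma> {1..2*s+2}"
    by (auto simp: inj_on_def \<sigma>_def split: if_splits)
  have c\<sigma>U: "card (\<sigma> ` U) = s+1"
    using card_image[OF inj_on_subset[OF inj U]] cU by simp
  have sub: "\<sigma> ` U \<subseteq> {1..2*s+2} - U" using \<sigma>r no\<sigma> U by auto
  have "card ({1..2*s+2} - U) = s+1" using U cU by (simp add: card_Diff_subset finite_subset)
  hence eq: "\<sigma> ` U = {1..2*s+2} - U" using sub c\<sigma>U by (intro card_subset_eq) auto
  have clos: "\<sigma> (\<sigma> i) \<in> U" if iU: "i \<in> U" for i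
  proof (rule ccontr)
    assume nU: "\<sigma> (\<sigma> i) \<notin> U"
    have si: "\<sigma> i \<in> {1..2*s+2}" using \<sigma>r iU U by auto
    have "\<sigma> (\<sigma> i) \<in> \<sigma> ` U" using eq \<sigma>r[OF si] nU by auto
    then obtain k where k: "k \<in> U" "\<sigma> (\<sigma> i) = \<sigma> k" by auto
    hence "\<sigma> i = k" using inj_onD[OF inj k(2)] si U by auto
    thus False using no\<sigma>[OF iU] k by simp
  qed
  have ss3: "i - 2 \<in> U" if "i \<in> U" "3 \<le> i" for i
  proof -
    have "i \<le> 2*s+2" using that U by auto
    hence "\<sigma> (\<sigma> i) = i - 2" using that by (auto simp: \<sigma>_def)
    thus ?thesis using clos[OF that(1)] by simp
  qed
  have ss1: "2*s+1 \<in> U" if "1 \<in> U"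
  proof -
    have "\<sigma> (\<sigma> 1) = 2*s+1" by (auto simp: \<sigma>_def)
    thus ?thesis using clos[OF that] by simp
  qed
  have ss2: "2*s+2 \<in> U" if "2 \<in> U"
  proof -
    have "\<sigma> (\<sigma> 2) = 2*s+2" by (auto simp: \<sigma>_def)
    thus ?thesis using clos[OF that] by simp
  qed
  have down: "i - 2*k \<in> U" if "i \<in> U" "2*k < i" for i k
    using that(2)
  proof (induction k)
    case 0 thus ?case using that(1) by simp
  next
    case (Suc k)
    hence "i - 2*k \<in> U" by simp
    moreover have "3 \<le> i - 2*k" using Suc.prems by simp
    ultimately have "i - 2*k - 2 \<in> U" by (rule ss3)
    thus ?case by (simp add: algebra_simps)
  qed
  have "U \<noteq> {}" using cU by auto
  then obtain u where uU: "u \<in> U" by auto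
  have u1: "1 \<le> u" "u \<le> 2*s+2" using uU U by auto
  show False
  proof (cases "odd u")
    case True
    then obtain k where "u = 2*k+1" using oddE by blast
    hence "1 \<in> U" using down[OF uU, of k] by simp
    hence top: "2*s+1 \<in> U" by (rule ss1)
    have odds: "j \<in> U" if "odd j" "j \<le> 2*s+1" for j
    proof -
      obtain m where m: "j = 2*m+1" using \<open>odd j\<close> oddE by blast
      have "2*(s - m) < 2*s+1" by simp
      have "2*s+1 - 2*(s-m) = j" using m that by auto
      thus ?thesis using down[OF top, of "s-m"] by simp
    qed
    show False
    proof (cases "even s")
      case True
      have "1 \<in> U" "1+s \<in> U" using odds True s3 by auto
      moreover have "\<sigma> 1 = 1+s" by (simp add: \<sigma>_def)
      ultimately show False using no\<sigma> by metis
    next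
      case False
      have "{3, s+4} \<in> stable_kneser_vertices (2*s+2) 2 s"
        using s3 by (intro pair_in_V) auto
      moreover have "{3, s+4} \<subseteq> U" using odds False s3 by auto
      moreover have "{3, s+4} \<noteq> {1::nat, s+2}" by (auto simp: doubleton_eq_iff)
      ultimately show False using H by blast
    qed
  next
    case False
    then obtain m where um: "u = 2*m" by (auto elim: evenE)
    define k where "k = m - 1"
    have "u = 2*k+2" using um u1 unfolding k_def by (cases m) auto
    hence "2 \<in> U" using down[OF uU, of k] by simp
    hence top: "2*s+2 \<in> U" by (rule ss2)
    have evens: "j \<in> U" if "even j" "2 \<le> j" "j \<le> 2*s+2" for j
    proof -
      obtain m where m: "j = 2*m" using \<open>even j\<close> evenE by blast
      have "2*(s+1 - m) < 2*s+2" using m that by auto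
      moreover have "2*s+2 - 2*(s+1-m) = j" using m that by auto
      ultimately show ?thesis using down[OF top, of "s+1-m"] by simp
    qed
    show False
    proof (cases "even s")
      case True
      have "2 \<in> U" "2+s \<in> U" using evens True s3 by auto
      moreover have "\<sigma> 2 = 2+s" by (simp add: \<sigma>_def)
      ultimately show False using no\<sigma> by metis
    next
      case False
      have "{2, s+3} \<in> stable_kneser_vertices (2*s+2) 2 s"
        using s3 by (intro pair_in_V) auto
      moreover have "{2, s+3} \<subseteq> U" using evens False s3 by auto
      moreover have "{2, s+3} \<noteq> {1::nat, s+2}" by (auto simp: doubleton_eq_iff)
      ultimately show False using H by blast
    qed
  qed
qed


lemma col_mono: "proper_colouring V E m f \<Longrightarrow> W \<subseteq> V \<Longrightarrow> proper_colouring W E m f"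
  unfolding proper_colouring_def by blast

lemma no_col:
  assumes s3: "s \<ge> 3"
    and col: "proper_colouring (stable_kneser_vertices (2*s+2) 2 s - {{1,s+2}}) kneser_adj m f"
  shows "s+2 \<le> m"
proof (rule ccontr)
  assume "\<not> ?thesis" hence m: "m \<le> s+1" by simp
  define V where "V = stable_kneser_vertices (2*s+2) 2 s"
  define W where "W = V - {{1,s+2}}"
  have colW: "\<forall>v\<in>W. f v < m" "\<forall>u\<in>W. \<forall>v\<in>W. kneser_adj u v \<longrightarrow> f u \<noteq> f v"
    using col unfolding proper_colouring_def W_def V_def by auto
  define cen where "cen c = (SOME x. \<forall>B\<in>{A\<in>W. f A = c}. x \<in> B)" for c
  have cenA: "cen (f A) \<in> A" if AW: "A \<in> W" for A
  proof -
    have "\<exists>x. \<forall>B\<in>{B\<in>W. f B = f A}. x \<in> B"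
    proof (rule star[OF s3])
      show "{B \<in> W. f B = f A} \<subseteq> stable_kneser_vertices (2 * s + 2) 2 s"
        unfolding W_def V_def by auto
      show "A \<in> {B \<in> W. f B = f A}" using AW by simp
      fix B B' assume "B \<in> {B \<in> W. f B = f A}" "B' \<in> {B \<in> W. f B = f A}"
      thus "B \<inter> B' \<noteq> {}" using colW(2) unfolding kneser_adj_def by (metis (mono_tags, lifting) mem_Collect_eq)
    qed
    hence "\<forall>B\<in>{B\<in>W. f B = f A}. cen (f A) \<in> B"
      unfolding cen_def by (rule someI_ex)
    thus ?thesis using AW by auto
  qed
  define C where "C = cen ` {..<m}"
  have cC: "card C \<le> s+1" unfolding C_def using card_image_le[of "{..<m}" cen] m by simp
  have "card {1..2*s+2} - card C \<le> card ({1..2*s+2::nat} - C)"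
    by (rule diff_card_le_card_Diff) (simp add: C_def)
  hence "s+1 \<le> card ({1..2*s+2::nat} - C)" using cC by simp
  then obtain U where U: "U \<subseteq> {1..2*s+2} - C" "card U = s+1"
    by (meson obtain_subset_with_card_n)
  obtain A where A: "A \<in> V" "A \<subseteq> U" "A \<noteq> {1,s+2}"
    using bigset[OF s3 _ U(2)] U(1) unfolding V_def by blast
  have AW: "A \<in> W" using A unfolding W_def by auto
  have "cen (f A) \<in> C" using colW(1) AW unfolding C_def by auto
  moreover have "cen (f A) \<in> U" using cenA[OF AW] A by auto
  ultimately show False using U by auto
qed

lemma upper_col:
  assumes s3: "s \<ge> 3"
  shows "proper_colouring (stable_kneser_vertices (2*s+2) 2 s) kneser_adj (s+2) (\<lambda>A. Max A - (s+1))"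
proof -
  define V where "V = stable_kneser_vertices (2*s+2) 2 s"
  have mx: "Max A \<in> A \<and> s+1 \<le> Max A \<and> Max A \<le> 2*s+2" if AV: "A \<in> V" for A
  proof -
    have cA: "card A = 2" and sub: "A \<subseteq> {1..2*s+2}"
      using AV unfolding V_def stable_kneser_vertices_def s_stable_def by blast+
    have fin: "finite A" using cA card_ge_0_finite by force
    have ne: "A \<noteq> {}" using cA by force
    have MA: "Max A \<in> A" using fin ne by (rule Max_in)
    obtain y where y: "A = {Max A, y}" "y \<noteq> Max A" using card2_elem[OF cA MA] by blast
    have yA: "y \<in> A" using y(1) by blast
    have "y \<le> Max A" using fin yA by (rule Max_ge)
    moreover have "int s \<le> \<bar>int (Max A) - int y\<bar>"
      using V_dist[of A "2*s+2" 2 s "Max A" y] AV MA yA y(2) unfolding V_def by blast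
    moreover have "1 \<le> y" using sub yA by auto
    ultimately have "s+1 \<le> Max A" by linarith
    moreover have "Max A \<le> 2*s+2" using sub MA by auto
    ultimately show ?thesis using MA by blast
  qed
  show ?thesis unfolding proper_colouring_def V_def[symmetric]
  proof (intro conjI ballI impI)
    fix v assume "v \<in> V"
    hence "s+1 \<le> Max v" "Max v \<le> 2*s+2" using mx by blast+
    thus "Max v - (s+1) < s+2" by linarith
  next
    fix u v assume uv: "u \<in> V" "v \<in> V" "kneser_adj u v"
    show "Max u - (s+1) \<noteq> Max v - (s+1)"
    proof
      assume "Max u - (s+1) = Max v - (s+1)"
      moreover have "s+1 \<le> Max u" "s+1 \<le> Max v" using mx uv by blast+
      ultimately have "Max u = Max v" by linarith
      moreover have "Max u \<in> u" "Max v \<in> v" using mx uv by blast+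
      ultimately have "Max u \<in> u \<inter> v" by simp
      thus False using uv(3) unfolding kneser_adj_def by blast
    qed
  qed
qed

theorem mainTheorem3:
  fixes s :: nat
  assumes "s \<ge> 3"
  shows "chromatic_number (stable_kneser_vertices (2*s+2) 2 s) kneser_adj = s + 2
         \<and> \<not> chi_critical (stable_kneser_vertices (2*s+2) 2 s) kneser_adj"
proof -
  define V where "V = stable_kneser_vertices (2*s+2) 2 s"
  define W where "W = V - {{1,s+2}}"
  have WV: "W \<subseteq> V" unfolding W_def by auto
  have DV: "{1,s+2} \<in> V" unfolding V_def using assms by (intro pair_in_V) auto
  have Wp: "W \<subset> V" using DV unfolding W_def by blast
  have cV: "chromatic_number V kneser_adj = s+2"
    unfolding chromatic_number_def
  proof (rule Least_equality)
    show "\<exists>f. proper_colouring V kneser_adj (s+2) f" using upper_col[OF assms] V_def by blast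
    fix m assume "\<exists>f. proper_colouring V kneser_adj m f"
    then obtain f where "proper_colouring V kneser_adj m f" by blast
    hence "proper_colouring W kneser_adj m f" using col_mono WV by blast
    thus "s+2 \<le> m" using no_col[OF assms] unfolding W_def V_def by blast
  qed
  have cW: "chromatic_number W kneser_adj = s+2"
    unfolding chromatic_number_def
  proof (rule Least_equality)
    show "\<exists>f. proper_colouring W kneser_adj (s+2) f"
      using upper_col[OF assms] col_mono WV V_def by blast
    fix m assume "\<exists>f. proper_colouring W kneser_adj m f"
    then obtain f where "proper_colouring W kneser_adj m f" by blast
    thus "s+2 \<le> m" using no_col[OF assms] unfolding W_def V_def by blast
  qed
  have "\<not> chi_critical V kneser_adj"
    unfolding chi_critical_def using Wp cV cW by (metis less_irrefl)
  thus ?thesis using cV V_def by simp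
qed

end
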